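(* Consider a repeater chain in the model described in the context with $N+1$ nodes (hence $N$ edges) and elementary-link fidelity $F$ with $\tfrac14<F<1$. Let $Q^*\approx0.110028$ be the unique solution in $[0,\tfrac12]$ of $h(Q)=\tfrac12$, where $h(Q)=-Q\log_2Q-(1-Q)\log_2(1-Q)$, and let $$N^*=\frac{\log(1-2Q^* )}{\log\left(\frac{4F-1}{3}\right)}.$$ Then for every $N\ge N^*$ the secret-key rate of the chain is $\mathrm{SKR}=0$.
   Context: Repeater-chain model (swap-ASAP, synchronized attempts), with arbitrary edge lengths and memory coherence time $T$ at the repeater nodes. Edge $j$ connects nodes $j$ and $j+1$ and has length $l_j\ge0$ (km). Entanglement generation proceeds in synchronized rounds of duration $t_{\mathrm{att}}=\frac1c\max_jl_j$, $c=200{,}000$ km/s. In each round, each edge not yet successful attempts, succeeding independently with probability $p_j=10^{-\alpha l_j/10}$, $\alpha=0.2\ \mathrm{km}^{-1}$; the number of rounds $X_j$ until edge $j$ succeeds is geometric on $\{1,2,\dots\}$ with parameter $p_j$, independently across edges. Edge $j$ completes at time $t_j=t_{\mathrm{att}}X_j$, and the chain completes at $T_{\mathrm{done}}=t_{\mathrm{att}}\max_jX_j$; the entangling rate is $R=1/\mathbb E[T_{\mathrm{done}}]$. Each successful edge produces the two-qubit Werner state $W_{w_0}=w_0|\phi^+\rangle\langle\phi^+|+(1-w_0)\mathbb 1/4$ with $w_0=(4F-1)/3$. Each repeater node (every non-end node) performs entanglement swapping as soon as both of its links exist; meanwhile a stored qubit $k$ held for time $t$ in a memory with coherence time $T$ undergoes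 $\rho\mapsto e^{-t/T}\rho+(1-e^{-t/T})\frac{\mathbb 1_2}{2}\otimes\mathrm{Tr}_k\rho$; end nodes measure immediately and suffer no memory noise. Consequently, given the completion times, the end-to-end state is the Werner state with parameter $w_{e2e}=w_0^{N}\prod_{i}e^{-|t_i-t_{i-1}|/T}$, the product over repeater nodes $i$ (node $i$ sitting between edges $i-1$ and $i$); the delivered state is the Werner state with parameter $\mathbb E[w_{e2e}]$. Its quantum bit error rates are $Q_X=Q_Z=(1-\mathbb E[w_{e2e}])/2$, the secret-key fraction is $\mathrm{SKF}=\max(0,1-h(Q_X)-h(Q_Z))$, and the secret-key rate is $\mathrm{SKR}=R\cdot\mathrm{SKF}$. *)

theory Defs
  imports "HOL-Probability.Probability"
begin

text \<open>Physical constants: speed of light in fibre (km/s) and attenuation (1/km).\<close>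
definition c_light :: real where "c_light = 200000"
definition att_alpha :: real where "att_alpha = 0.2"

definition p_succ :: "real \<Rightarrow> real" where
  "p_succ l = 10 powr (- att_alpha * l / 10)"

definition t_att :: "nat \<Rightarrow> (nat \<Rightarrow> real) \<Rightarrow> real" where
  "t_att N l = Max (l ` {..<N}) / c_light"

text \<open>Joint law of the numbers of rounds X_j (j < N): independent, X_j geometric on {1,2,...}
  with parameter p_succ (l j); entries outside {..<N} are fixed to 0.\<close>
definition X_dist :: "nat \<Rightarrow> (nat \<Rightarrow> real) \<Rightarrow> (nat \<Rightarrow> nat) pmf" where
  "X_dist N l = Pi_pmf {..<N} 0 (\<lambda>j. map_pmf Suc (geometric_pmf (p_succ (l j))))"

definition w0 :: "real \<Rightarrow> real" where "w0 F = (4 * F - 1) / 3"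

text \<open>End-to-end Werner parameter given the round counts x; repeater nodes are 1, ..., N-1,
  node i sits between edges i-1 and i; t_j = t_att * X_j.\<close>
definition w_e2e :: "nat \<Rightarrow> (nat \<Rightarrow> real) \<Rightarrow> real \<Rightarrow> real \<Rightarrow> (nat \<Rightarrow> nat) \<Rightarrow> real" where
  "w_e2e N l T F x =
     w0 F ^ N * (\<Prod>i\<in>{1..<N}. exp (- \<bar>t_att N l * real (x i) - t_att N l * real (x (i - 1))\<bar> / T))"

definition E_w :: "nat \<Rightarrow> (nat \<Rightarrow> real) \<Rightarrow> real \<Rightarrow> real \<Rightarrow> real" where
  "E_w N l T F = measure_pmf.expectation (X_dist N l) (w_e2e N l T F)"

definition ent_rate :: "nat \<Rightarrow> (nat \<Rightarrow> real) \<Rightarrow> real" where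
  "ent_rate N l = 1 / measure_pmf.expectation (X_dist N l)
                        (\<lambda>x. t_att N l * real (Max (x ` {..<N})))"

definition h_bin :: "real \<Rightarrow> real" where
  "h_bin q = - q * log 2 q - (1 - q) * log 2 (1 - q)"

definition QBER :: "nat \<Rightarrow> (nat \<Rightarrow> real) \<Rightarrow> real \<Rightarrow> real \<Rightarrow> real" where
  "QBER N l T F = (1 - E_w N l T F) / 2"

definition SKF :: "nat \<Rightarrow> (nat \<Rightarrow> real) \<Rightarrow> real \<Rightarrow> real \<Rightarrow> real" where
  "SKF N l T F = max 0 (1 - h_bin (QBER N l T F) - h_bin (QBER N l T F))"

definition SKR :: "nat \<Rightarrow> (nat \<Rightarrow> real) \<Rightarrow> real \<Rightarrow> real \<Rightarrow> real" where
  "SKR N l T F = ent_rate N l * SKF N l T F"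

definition Q_star :: real where
  "Q_star = (THE q. 0 \<le> q \<and> q \<le> 1/2 \<and> h_bin q = 1/2)"

definition N_star :: "real \<Rightarrow> real" where
  "N_star F = ln (1 - 2 * Q_star) / ln ((4 * F - 1) / 3)"

end

theory Submission
  imports Defs
begin

lemma h_alt: "h_bin q = - (q * ln q + (1 - q) * ln (1 - q)) / ln 2"
  unfolding h_bin_def log_def by (simp add: field_simps)

lemma h_deriv:
  assumes "0 < q" "q < 1"
  shows "(h_bin has_real_derivative (ln (1 - q) - ln q) / ln 2) (at q)"
proof -
  have "((\<lambda>q. - (q * ln q + (1 - q) * ln (1 - q)) / ln 2) has_real_derivative
     (- ((1 * ln q + q * (1 / q)) + ((-1) * ln (1 - q) + (1 - q) * (- 1 / (1 - q))))) / ln 2) (at q)"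
    using assms
    by (auto intro!: derivative_eq_intros)
  moreover have "(- ((1 * ln q + q * (1 / q)) + ((-1) * ln (1 - q) + (1 - q) * (- 1 / (1 - q))))) / ln 2
     = (ln (1 - q) - ln q) / ln 2" using assms by (simp add: field_simps)
  ultimately show ?thesis unfolding h_alt[abs_def] by simp
qed

lemma h_cont:
  assumes "0 < a" "b < 1"
  shows "continuous_on {a..b} h_bin"
proof (rule continuous_at_imp_continuous_on, intro ballI)
  fix x assume "x \<in> {a..b}"
  then have "0 < x" "x < 1" using assms by auto
  then show "isCont h_bin x" using h_deriv DERIV_isCont by blast
qed

lemma h_strict:
  assumes "0 < a" "a < b" "b \<le> 1/2"
  shows "h_bin a < h_bin b"
proof (rule DERIV_pos_imp_increasing_open[OF assms(2)])
  fix x assume x: "a < x" "x < b"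
  have "ln x < ln (1 - x)" using x assms by simp
  then have "(ln (1 - x) - ln x) / ln 2 > 0" by simp
  then show "\<exists>y. DERIV h_bin x :> y \<and> y > 0" using h_deriv[of x] x assms by auto
next
  show "continuous_on {a..b} h_bin" using h_cont assms by simp
qed

lemma h_zero: "h_bin 0 = 0" by (simp add: h_bin_def)

lemma h_pos: assumes "0 < q" "q < 1" shows "h_bin q > 0"
proof -
  have "ln q < 0" "ln (1 - q) < 0" using assms by auto
  then have "q * ln q < 0" "(1 - q) * ln (1 - q) < 0" using assms
    by (auto simp: mult_pos_neg)
  then show ?thesis unfolding h_alt by (simp add: divide_pos_pos)
qed

lemma h_half: "h_bin (1/2) = 1"
  unfolding h_bin_def by (simp add: log_divide)

lemma ln2_gt: "ln (2::real) > 1/4"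
proof -
  have "ln (1/2::real) \<le> 1/2 - 1" by (rule ln_le_minus_one) auto
  moreover have "ln (1/2::real) = - ln 2" by (simp add: ln_div)
  ultimately show ?thesis by simp
qed

lemma h_16: "h_bin (1/16) < 1/2"
proof -
  have a: "- (1/16 * ln (1/16::real)) = 1/4 * ln 2"
  proof -
    have "ln (1/16::real) = - ln 16" by (simp add: ln_div)
    moreover have "ln (16::real) = 4 * ln 2"
      using ln_realpow[of 2 4] by simp
    ultimately show ?thesis by simp
  qed
  have b: "- ((15/16) * ln (15/16::real)) \<le> 1/16"
  proof -
    have "- ln (15/16::real) \<le> 1/15"
    proof -
      have "ln (16/15::real) \<le> 16/15 - 1" by (rule ln_le_minus_one) auto
      moreover have "ln (15/16::real) = - ln (16/15)"
        by (metis ln_inverse inverse_divide zero_less_divide_iff zero_less_numeral)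
      ultimately show ?thesis by simp
    qed
    then show ?thesis by simp
  qed
  have "h_bin (1/16) = (- (1/16 * ln (1/16::real)) - ((15/16) * ln (15/16::real))) / ln 2"
    unfolding h_alt by (simp add: field_simps)
  also have "\<dots> \<le> (1/4 * ln 2 + 1/16) / ln 2"
    using a b by (intro divide_right_mono) auto
  also have "\<dots> < 1/2"
    using ln2_gt by (simp add: field_simps)
  finally show ?thesis .
qed

lemma Q_star_props: "0 < Q_star \<and> Q_star \<le> 1/2 \<and> h_bin Q_star = 1/2"
proof -
  have cont: "continuous_on {1/16..1/2} h_bin" using h_cont by simp
  obtain q where q: "1/16 \<le> q" "q \<le> 1/2" "h_bin q = 1/2"
    using IVT'[of h_bin "1/16" "1/2" "1/2", OF _ _ _ cont] h_16 h_half by auto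
  have uniq: "p = q" if "0 \<le> p" "p \<le> 1/2" "h_bin p = 1/2" for p
  proof -
    have "p \<noteq> 0" using that h_zero by auto
    then have "p > 0" using that by auto
    show ?thesis
    proof (rule ccontr)
      assume "p \<noteq> q"
      then consider "p < q" | "q < p" by linarith
      then show False
        using h_strict[of p q] h_strict[of q p] \<open>p > 0\<close> q that by (cases; auto)
    qed
  qed
  have "Q_star = q" unfolding Q_star_def
    by (rule the_equality) (use q uniq in auto)
  then show ?thesis using q by auto
qed

lemma Q_star_lt: "Q_star < 1/2"
proof -
  have "Q_star \<noteq> 1/2"
  proof
    assume "Q_star = 1/2"
    then have "h_bin Q_star = 1" using h_half by (simp only:)
    then show False using Q_star_props by simp
  qed
  then show ?thesis using Q_star_props by linarith
qed

theorem mainTheorem9: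
  fixes N :: nat and l :: "nat \<Rightarrow> real" and T F :: real
  assumes "\<forall>j<N. 0 \<le> l j"
    and "0 < T"
    and "1/4 < F" and "F < 1"
    and "real N \<ge> N_star F"
  shows "SKR N l T F = 0"
proof -
  define w where "w = w0 F"
  have w0: "0 < w" "w < 1" using assms(3,4) unfolding w_def w0_def by auto
  have wx: "0 \<le> w_e2e N l T F x \<and> w_e2e N l T F x \<le> w ^ N" for x
  proof -
    let ?P = "(\<Prod>i\<in>{1..<N}. exp (- \<bar>t_att N l * real (x i) - t_att N l * real (x (i - 1))\<bar> / T))"
    have p0: "0 \<le> ?P" by (intro prod_nonneg) auto
    have p1: "?P \<le> 1"
    proof (rule prod_le_1)
      fix i assume "i \<in> {1..<N}"
      have "- \<bar>t_att N l * real (x i) - t_att N l * real (x (i - 1))\<bar> / T \<le> 0"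
        using assms(2) by (simp add: divide_nonpos_pos)
      then show "0 \<le> exp (- \<bar>t_att N l * real (x i) - t_att N l * real (x (i - 1))\<bar> / T) \<and>
         exp (- \<bar>t_att N l * real (x i) - t_att N l * real (x (i - 1))\<bar> / T) \<le> 1" by simp
    qed
    have "w_e2e N l T F x = w ^ N * ?P" unfolding w_e2e_def w_def by simp
    moreover have "w ^ N * ?P \<le> w ^ N * 1" using p1 w0 by (intro mult_left_mono) auto
    ultimately show ?thesis using p0 w0 by simp
  qed
  have E0: "0 \<le> E_w N l T F" unfolding E_w_def
    using wx by (intro integral_nonneg_AE) auto
  have E1: "E_w N l T F \<le> w ^ N"
  proof (cases "integrable (measure_pmf (X_dist N l)) (w_e2e N l T F)")
    case True
    have "E_w N l T F \<le> measure_pmf.expectation (X_dist N l) (\<lambda>_. w ^ N)"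
      unfolding E_w_def using True wx by (intro integral_mono) auto
    also have "\<dots> = w ^ N" by simp
    finally show ?thesis .
  next
    case False
    then show ?thesis unfolding E_w_def using w0 by (simp add: not_integrable_integral_eq)
  qed
  have Q: "0 < Q_star" "Q_star < 1/2" "h_bin Q_star = 1/2" using Q_star_props Q_star_lt by auto
  have lnw: "ln w < 0" using w0 by simp
  have "N_star F = ln (1 - 2 * Q_star) / ln w" unfolding N_star_def w_def w0_def by simp
  then have "ln (1 - 2 * Q_star) / ln w \<le> real N" using assms(5) by simp
  then have "real N * ln w \<le> ln (1 - 2 * Q_star)" using lnw by (simp add: divide_le_eq mult.commute)
  then have "ln (w ^ N) \<le> ln (1 - 2 * Q_star)" using w0 by (simp add: ln_realpow)
  then have wN: "w ^ N \<le> 1 - 2 * Q_star" using w0 Q by (simp)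
  define q where "q = QBER N l T F"
  have q: "Q_star \<le> q" "q \<le> 1/2" unfolding q_def QBER_def using E0 E1 wN by auto
  have "h_bin q \<ge> 1/2"
  proof (cases "q = Q_star")
    case True then show ?thesis using Q by simp
  next
    case False then show ?thesis using h_strict[of Q_star q] q Q by auto
  qed
  then have "SKF N l T F = 0" unfolding SKF_def q_def[symmetric] by simp
  then show ?thesis unfolding SKR_def by simp
qed

end
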